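(* Let $G$ be a graph, let $\mathcal P$ be a partition of $A\subseteq V(G)$ and $\mathcal P'$ a partition of $A'\subseteq V(G)$. If $d(A,A')\ne 0$ then $$\mathcal H(\mathcal P,\mathcal P')-\mathcal H(\{A\},\{A'\})\ge \frac12\, d(A,A')\Bigg(\sum_{V\in\mathcal P,\ V'\in\mathcal P'}\frac{|V||V'|}{|A||A'|}\,\Big|\frac{d(V,V')}{d(A,A')}-1\Big|\Bigg)^2 .$$
   Context: $e(X,Y)$ is the number of ordered pairs $(u,v)\in X\times Y$ with $uv\in E(G)$ and $d(X,Y)=e(X,Y)/(|X||Y|)$. $H(x)=x\ln x$ with $H(0)=0$. For a partition $\mathcal P$ of $A\subseteq V(G)$ and a partition $\mathcal P'$ of $A'\subseteq V(G)$, $$\mathcal H(\mathcal P,\mathcal P')=\sum_{V\in\mathcal P,\,V'\in\mathcal P'}\frac{|V||V'|}{|A||A'|}H(d(V,V')).$$ *)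

theory Defs
  imports Complex_Main "HOL-Library.Disjoint_Sets"
begin

definition simple_graph :: "'a set \<Rightarrow> ('a \<Rightarrow> 'a \<Rightarrow> bool) \<Rightarrow> bool" where
  "simple_graph V E \<longleftrightarrow> finite V \<and> (\<forall>u v. E u v \<longrightarrow> E v u) \<and> (\<forall>u. \<not> E u u)
     \<and> (\<forall>u v. E u v \<longrightarrow> u \<in> V \<and> v \<in> V)"

definition e_pairs :: "('a \<Rightarrow> 'a \<Rightarrow> bool) \<Rightarrow> 'a set \<Rightarrow> 'a set \<Rightarrow> nat" where
  "e_pairs E X Y = card {(u, v). u \<in> X \<and> v \<in> Y \<and> E u v}"

definition density :: "('a \<Rightarrow> 'a \<Rightarrow> bool) \<Rightarrow> 'a set \<Rightarrow> 'a set \<Rightarrow> real" where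
  "density E X Y = real (e_pairs E X Y) / (real (card X) * real (card Y))"

definition Hfun :: "real \<Rightarrow> real" where
  "Hfun x = (if x = 0 then 0 else x * ln x)"

definition entropy_pp :: "('a \<Rightarrow> 'a \<Rightarrow> bool) \<Rightarrow> 'a set \<Rightarrow> 'a set set \<Rightarrow> 'a set \<Rightarrow> 'a set set \<Rightarrow> real" where
  "entropy_pp E A P A' P' =
     (\<Sum>(W, W') \<in> P \<times> P'. real (card W) * real (card W') / (real (card A) * real (card A'))
        * Hfun (density E W W'))"

end

theory Submission
  imports Defs "HOL-Analysis.Convex"
begin
lemma gderiv:
  fixes t :: real assumes t: "t > 0"
  shows "DERIV (\<lambda>t. ln t - (t-1)*(5*t+1)/(2*t*(t+2))) t :> (t-1)^3/(t^2*(t+2)^2)"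
proof -
  have "DERIV (\<lambda>t. ln t - (t-1)*(5*t+1)/(2*t*(t+2))) t :>
     (1/t - ((5*t+1 + (t-1)*5)*(2*t*(t+2)) - (t-1)*(5*t+1)*(2*(t+2)+2*t))/(2*t*(t+2))^2)"
    using t by (auto intro!: derivative_eq_intros simp: power2_eq_square)
  moreover have "(1/t - ((5*t+1 + (t-1)*5)*(2*t*(t+2)) - (t-1)*(5*t+1)*(2*(t+2)+2*t))/(2*t*(t+2))^2)
     = (t-1)^3/(t^2*(t+2)^2)"
  proof -
    have a: "t \<noteq> 0" "t + 2 \<noteq> 0" "2*t*(t+2) \<noteq> 0" using t by auto
    show ?thesis using a by (simp add: divide_simps) (simp add: algebra_simps power2_eq_square power3_eq_cube)
  qed
  ultimately show ?thesis by simp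
qed

lemma ln_lower:
  fixes x :: real assumes x: "x > 0"
  shows "ln x \<ge> (x-1)*(5*x+1)/(2*x*(x+2))"
proof -
  define g where "g = (\<lambda>t::real. ln t - (t-1)*(5*t+1)/(2*t*(t+2)))"
  have g1: "g 1 = 0" by (simp add: g_def)
  have "g x \<ge> 0"
  proof (cases "x \<ge> 1")
    case True
    have "g 1 \<le> g x"
    proof (rule DERIV_nonneg_imp_nondecreasing[OF True])
      fix t :: real assume "1 \<le> t" "t \<le> x"
      then show "\<exists>y. DERIV g t :> y \<and> y \<ge> 0"
        unfolding g_def by (intro exI[of _ "(t-1)^3/(t^2*(t+2)^2)"] conjI gderiv) auto
    qed
    then show ?thesis using g1 by simp
  next
    case False
    have "g x \<ge> g 1"
    proof (rule DERIV_nonpos_imp_nonincreasing[of x 1])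
      show "x \<le> 1" using False by simp
    next
      fix t :: real assume "x \<le> t" "t \<le> 1"
      then show "\<exists>y. DERIV g t :> y \<and> y \<le> 0"
        unfolding g_def using x
        by (intro exI[of _ "(t-1)^3/(t^2*(t+2)^2)"] conjI gderiv) (auto intro!: divide_nonpos_nonneg simp: power_le_zero_eq)
    qed
    then show ?thesis using g1 by simp
  qed
  then show ?thesis by (simp add: g_def)
qed
lemma Hfun_lower:
  fixes x :: real assumes x: "x \<ge> 0"
  shows "Hfun x \<ge> x - 1 + 3*(x-1)^2/(2*(x+2))"
proof (cases "x = 0")
  case True then show ?thesis by (simp add: Hfun_def)
next
  case False
  then have xp: "x > 0" using x by simp
  have "x * ln x \<ge> x * ((x-1)*(5*x+1)/(2*x*(x+2)))"
    using ln_lower[OF xp] xp by (intro mult_left_mono) auto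
  also have "x * ((x-1)*(5*x+1)/(2*x*(x+2))) = x - 1 + 3*(x-1)^2/(2*(x+2))"
  proof -
    have "x \<noteq> 0" "x + 2 \<noteq> 0" using xp by auto
    then show ?thesis by (simp add: divide_simps) (simp add: algebra_simps power2_eq_square)
  qed
  finally show ?thesis using False by (simp add: Hfun_def)
qed

lemma pinsker_finite:
  fixes w x :: "'i \<Rightarrow> real"
  assumes fin: "finite I" and w: "\<And>i. i \<in> I \<Longrightarrow> w i \<ge> 0" and x: "\<And>i. i \<in> I \<Longrightarrow> x i \<ge> 0"
    and sw: "(\<Sum>i\<in>I. w i) = 1" and swx: "(\<Sum>i\<in>I. w i * x i) = 1"
  shows "1/2 * (\<Sum>i\<in>I. w i * \<bar>x i - 1\<bar>)^2 \<le> (\<Sum>i\<in>I. w i * Hfun (x i))"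
proof -
  define T where "T = (\<Sum>i\<in>I. w i * ((x i - 1)^2/(x i + 2)))"
  have "(\<Sum>i\<in>I. w i * Hfun (x i)) \<ge> (\<Sum>i\<in>I. w i * (x i - 1 + 3*(x i-1)^2/(2*(x i+2))))"
    using w x Hfun_lower by (intro sum_mono mult_left_mono) auto
  also have "(\<Sum>i\<in>I. w i * (x i - 1 + 3*(x i-1)^2/(2*(x i+2)))) =
      (\<Sum>i\<in>I. w i * x i) - (\<Sum>i\<in>I. w i) + 3/2 * T"
    unfolding T_def by (simp add: algebra_simps sum.distrib sum_subtractf sum_distrib_left)
  finally have h: "(\<Sum>i\<in>I. w i * Hfun (x i)) \<ge> 3/2 * T" using sw swx by simp
  define a where "a i = sqrt (w i * ((x i - 1)^2/(x i + 2)))" for i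
  define b where "b i = sqrt (w i * (x i + 2))" for i
  have ab: "a i * b i = w i * \<bar>x i - 1\<bar>" if "i \<in> I" for i
  proof -
    have "a i * b i = sqrt ((w i)^2 * (x i - 1)^2)"
      using x[OF that] unfolding a_def b_def by (simp add: real_sqrt_mult[symmetric] power2_eq_square field_simps)
    also have "\<dots> = w i * \<bar>x i - 1\<bar>" using w[OF that] by (simp add: real_sqrt_mult abs_mult)
    finally show ?thesis .
  qed
  have a2: "(a i)^2 = w i * ((x i - 1)^2/(x i + 2))" if "i \<in> I" for i
    unfolding a_def using w[OF that] x[OF that] by simp
  have b2: "(b i)^2 = w i * (x i + 2)" if "i \<in> I" for i
    unfolding b_def using w[OF that] x[OF that] by simp
  have "(\<Sum>i\<in>I. w i * \<bar>x i - 1\<bar>)^2 = (\<Sum>i\<in>I. a i * b i)^2" using ab by simp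
  also have "\<dots> \<le> (\<Sum>i\<in>I. (a i)^2) * (\<Sum>i\<in>I. (b i)^2)" by (rule Cauchy_Schwarz_ineq_sum)
  also have "(\<Sum>i\<in>I. (a i)^2) = T" unfolding T_def using a2 by simp
  also have "(\<Sum>i\<in>I. (b i)^2) = 3"
  proof -
    have "(\<Sum>i\<in>I. (b i)^2) = (\<Sum>i\<in>I. w i * x i) + 2 * (\<Sum>i\<in>I. w i)"
      using b2 by (simp add: algebra_simps sum.distrib sum_distrib_left sum_distrib_right)
    then show ?thesis using sw swx by simp
  qed
  finally show ?thesis using h by simp
qed
lemma Hfun_scale:
  fixes d x :: real assumes "d > 0" "x \<ge> 0"
  shows "Hfun (d * x) = d * Hfun x + d * x * ln d"
  using assms by (cases "x = 0") (auto simp: Hfun_def ln_mult algebra_simps)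

theorem corollary3p3:
  fixes V :: "'a set" and E :: "'a \<Rightarrow> 'a \<Rightarrow> bool"
    and A A' :: "'a set" and P P' :: "'a set set"
  assumes "simple_graph V E"
    and "A \<subseteq> V" and "A' \<subseteq> V"
    and "partition_on A P" and "partition_on A' P'"
    and "density E A A' \<noteq> 0"
  shows "entropy_pp E A P A' P' - entropy_pp E A {A} A' {A'} \<ge>
    1/2 * density E A A' *
      (\<Sum>(W, W') \<in> P \<times> P'. real (card W) * real (card W') / (real (card A) * real (card A'))
         * \<bar>density E W W' / density E A A' - 1\<bar>)\<^sup>2"
proof -
  note pA = assms(4) and pA' = assms(5)
  have finV: "finite V" using assms(1) by (simp add: simple_graph_def)
  have finA: "finite A" "finite A'" using finV assms(2,3) finite_subset by auto
  have finP: "finite P" "finite P'" using finite_elements finA pA pA' by auto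
  have subP: "\<And>W. W \<in> P \<Longrightarrow> W \<subseteq> A" "\<And>W. W \<in> P' \<Longrightarrow> W \<subseteq> A'"
    using partition_onD1[OF pA] partition_onD1[OF pA'] by auto
  have finW: "\<And>W. W \<in> P \<Longrightarrow> finite W" "\<And>W. W \<in> P' \<Longrightarrow> finite W"
    using subP finA finite_subset by metis+
  have neW: "\<And>W. W \<in> P \<Longrightarrow> card W > 0" "\<And>W. W \<in> P' \<Longrightarrow> card W > 0"
    using partition_onD3[OF pA] partition_onD3[OF pA'] finW card_gt_0_iff by metis+
  define d where "d = density E A A'"
  have cA: "card A > 0" "card A' > 0"
    using assms(6) unfolding density_def by (auto simp: card_gt_0_iff finA)
  have dpos: "d > 0" using assms(6) unfolding d_def density_def using cA by auto
  have sumcard: "(\<Sum>W\<in>P. card W) = card A" "(\<Sum>W\<in>P'. card W) = card A'"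
    using card_Union_disjoint[OF partition_onD2[OF pA]] card_Union_disjoint[OF partition_onD2[OF pA']]
      partition_onD1[OF pA] partition_onD1[OF pA'] finW by auto
  define S where "S X Y = {(u, v). u \<in> X \<and> v \<in> Y \<and> E u v}" for X Y
  have finS: "finite (S X Y)" if "finite X" "finite Y" for X Y
  proof (rule finite_subset[OF _ finite_cartesian_product[of X Y]])
    show "S X Y \<subseteq> X \<times> Y" by (auto simp: S_def)
  qed (use that in auto)
  have SU: "S A A' = (\<Union>p\<in>P \<times> P'. S (fst p) (snd p))"
    using partition_onD1[OF pA] partition_onD1[OF pA'] unfolding S_def by auto
  have edge_sum: "e_pairs E A A' = (\<Sum>p\<in>P \<times> P'. e_pairs E (fst p) (snd p))"
  proof -
    have "card (S A A') = (\<Sum>p\<in>P \<times> P'. card (S (fst p) (snd p)))"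
      unfolding SU
    proof (rule card_UN_disjoint)
      show "finite (P \<times> P')" using finP by simp
      show "\<forall>p\<in>P \<times> P'. finite (S (fst p) (snd p))" using finS finW by auto
      show "\<forall>p\<in>P \<times> P'. \<forall>q\<in>P \<times> P'. p \<noteq> q \<longrightarrow> S (fst p) (snd p) \<inter> S (fst q) (snd q) = {}"
      proof (intro ballI impI)
        fix p q assume p: "p \<in> P \<times> P'" and q: "q \<in> P \<times> P'" and pq: "p \<noteq> q"
        then have "fst p \<inter> fst q = {} \<or> snd p \<inter> snd q = {}"
          using partition_onD2[OF pA] partition_onD2[OF pA'] 
          by (metis disjnt_def mem_Times_iff pairwiseD prod_eqI)
        then show "S (fst p) (snd p) \<inter> S (fst q) (snd q) = {}" unfolding S_def by auto
      qed
    qed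
    then show ?thesis unfolding e_pairs_def S_def by simp
  qed
  define w where "w p = real (card (fst p)) * real (card (snd p)) / (real (card A) * real (card A'))" for p :: "'a set \<times> 'a set"
  define x where "x p = density E (fst p) (snd p) / d" for p :: "'a set \<times> 'a set"
  have w0: "w p \<ge> 0" for p unfolding w_def by simp
  have x0: "x p \<ge> 0" for p unfolding x_def density_def using dpos by simp
  have sw: "(\<Sum>p\<in>P \<times> P'. w p) = 1"
  proof -
    have "(\<Sum>p\<in>P \<times> P'. real (card (fst p)) * real (card (snd p))) =
        (\<Sum>W\<in>P. real (card W)) * (\<Sum>W\<in>P'. real (card W))"
      by (simp add: sum_product sum.cartesian_product case_prod_beta)
    also have "\<dots> = real (card A) * real (card A')" using sumcard
      by (metis of_nat_sum)
    finally show ?thesis unfolding w_def using cA by (simp add: sum_divide_distrib[symmetric])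
  qed
  have swx: "(\<Sum>p\<in>P \<times> P'. w p * x p) = 1"
  proof -
    have "w p * x p = real (e_pairs E (fst p) (snd p)) / (real (card A) * real (card A') * d)"
      if "p \<in> P \<times> P'" for p
    proof -
      have "card (fst p) > 0" "card (snd p) > 0" using that neW by auto
      then show ?thesis using cA dpos unfolding w_def x_def density_def by (simp add: field_simps)
    qed
    then have "(\<Sum>p\<in>P \<times> P'. w p * x p) = (\<Sum>p\<in>P \<times> P'. real (e_pairs E (fst p) (snd p))) / (real (card A) * real (card A') * d)"
      by (simp add: sum_divide_distrib)
    also have "\<dots> = real (e_pairs E A A') / (real (card A) * real (card A') * d)"
      using edge_sum by simp
    also have "\<dots> = 1" using cA dpos unfolding d_def density_def by (simp add: field_simps)
    finally show ?thesis .
  qed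
  have pin: "1/2 * (\<Sum>p\<in>P \<times> P'. w p * \<bar>x p - 1\<bar>)^2 \<le> (\<Sum>p\<in>P \<times> P'. w p * Hfun (x p))"
    using finP by (intro pinsker_finite sw swx w0 x0) auto
  have ent1: "entropy_pp E A P A' P' = (\<Sum>p\<in>P \<times> P'. w p * Hfun (d * x p))"
    unfolding entropy_pp_def w_def x_def using dpos by (intro sum.cong) auto
  have ent2: "entropy_pp E A {A} A' {A'} = Hfun d"
    unfolding entropy_pp_def d_def using cA by simp
  have "(\<Sum>p\<in>P \<times> P'. w p * Hfun (d * x p)) =
      d * (\<Sum>p\<in>P \<times> P'. w p * Hfun (x p)) + d * ln d * (\<Sum>p\<in>P \<times> P'. w p * x p)"
    using Hfun_scale[OF dpos x0] by (simp add: sum_distrib_left sum.distrib algebra_simps)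
  then have lhs: "entropy_pp E A P A' P' - entropy_pp E A {A} A' {A'} = d * (\<Sum>p\<in>P \<times> P'. w p * Hfun (x p))"
    using ent1 ent2 swx dpos by (simp add: Hfun_def)
  have rhs: "(\<Sum>(W, W') \<in> P \<times> P'. real (card W) * real (card W') / (real (card A) * real (card A'))
         * \<bar>density E W W' / density E A A' - 1\<bar>) = (\<Sum>p\<in>P \<times> P'. w p * \<bar>x p - 1\<bar>)"
    unfolding w_def x_def d_def by (intro sum.cong) auto
  have fin: "1/2 * d * (\<Sum>p\<in>P \<times> P'. w p * \<bar>x p - 1\<bar>)^2 \<le> d * (\<Sum>p\<in>P \<times> P'. w p * Hfun (x p))"
  proof -
    have "d * (1/2 * (\<Sum>p\<in>P \<times> P'. w p * \<bar>x p - 1\<bar>)^2) \<le> d * (\<Sum>p\<in>P \<times> P'. w p * Hfun (x p))"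
      using pin dpos by (intro mult_left_mono) auto
    then show "1/2 * d * (\<Sum>p\<in>P \<times> P'. w p * \<bar>x p - 1\<bar>)^2 \<le> d * (\<Sum>p\<in>P \<times> P'. w p * Hfun (x p))"
      by (simp add: algebra_simps)
  qed
  show ?thesis using fin unfolding lhs rhs by (simp add: d_def)
qed
end
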